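(* Let $p(x,y)$ be a real polynomial with $p(0,0)=0$, $\nabla p(0,0)=(0,0)$, $\dim \operatorname{Co}N_p=2$, and such that for every $A\in\mathbb{N}^2$ the main $A$-quasi-homogeneous form of $p$ is nonnegative on $\mathbb{R}^2$ (in particular, for every corner point $(\alpha,\beta)$ of $\operatorname{Co}N_p$ that is Pareto-minimal in $N_p$, the coefficient of $x^\alpha y^\beta$ in $p$ is positive and $\alpha,\beta$ are even). Then: (i) if $\mathcal{A}_p=\emptyset$, then $(0,0)$ is a point of local minimum of $p$; (ii) if there exists $A\in\mathcal{A}_p$ for which condition $(C1)_A$ holds, then $(0,0)$ is not a point of local minimum of $p$; (iii) if $\mathcal{A}_p\neq\emptyset$ and for every $A\in\mathcal{A}_p$ condition $(C1)_A$ fails and condition $(C2)_A$ holds, then $(0,0)$ is a point of local minimum of $p$.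
   Context: $\mathbb{N}=\{1,2,\dots\}$; $\mathbb{N}_0^2$ is the set of $(A_1,A_2)\in\mathbb{N}^2$ with $\gcd(A_1,A_2)=1$. For a real polynomial $p(x,y)=\sum c_{\alpha\beta}x^\alpha y^\beta$, its support is $N_p=\{(\alpha,\beta)\in(\mathbb{N}\cup\{0\})^2: c_{\alpha\beta}\neq 0\}$ and $\operatorname{Co}N_p$ is its convex hull. For $A\in\mathbb{N}^2$, the main $A$-quasi-homogeneous form of $p$ is the sum of the terms of $p$ whose exponent vectors $k$ minimize $\langle A,k\rangle$ over $N_p$. For $A\in\mathbb{N}_0^2$, let $B_1^A<\dots<B_{r_A}^A$ be the distinct values of $\langle A,k\rangle$, $k\in N_p$, and let $\varphi_i^A$ be the sum of the terms of $p$ with $\langle A,k\rangle=B_i^A$; so $p=\varphi_1^A+\dots+\varphi_{r_A}^A$ and $\varphi_1^A$ is the main $A$-quasi-homogeneous form. If $\varphi=\sum_{i=1}^s a_ix^{\alpha_i}y^{\beta_i}$ ($a_i\neq0$, $\alpha_1>\dots>\alpha_s$) is one of these forms, its characteristic polynomial is $g(u)=\sum_i a_iu^{(\alpha_1-\alpha_i)/A_2}$ (the exponents are nonnegative integers). Let $g_1^A$ be the characteristic polynomial of $\varphi_1^A$. $\mathcal{A}_p$ is the set of $A\in\mathbb{N}_0^2$ such that $\varphi_1^A$ has at least three terms, $g_1^A(u)\ge0$ for all real $u$, and $g_1^A$ has at least one real root. For a function $\varphi$, $H_\varphi=\{(x,y)\in\mathbb{R}^2:\varphi(x,y)=0\}$.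 Condition $(C1)_A$: there is $(x_0,y_0)\in H_{\varphi_1^A}$ with $\varphi_2^A(x_0,y_0)<0$. Condition $(C2)_A$: for all $(x,y)\in H_{\varphi_1^A}$ with $x\neq0$, $y\neq0$ one has $\varphi_2^A(x,y)>0$. Local minimum at $(0,0)$ means $p(x,y)\ge p(0,0)$ in a neighborhood of $(0,0)$. *)

theory Defs
  imports "HOL-Analysis.Analysis" "HOL-Computational_Algebra.Polynomial"
begin

text \<open>A real polynomial p(x,y) is represented by its coefficient function
  c :: nat \<times> nat \<Rightarrow> real (coefficient of x^a y^b at (a,b)), with finite support.\<close>

definition supp2 :: "(nat \<times> nat \<Rightarrow> real) \<Rightarrow> (nat \<times> nat) set" where
  "supp2 c = {k. c k \<noteq> 0}"

definition is_poly2 :: "(nat \<times> nat \<Rightarrow> real) \<Rightarrow> bool" where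
  "is_poly2 c \<longleftrightarrow> finite (supp2 c)"

definition peval :: "(nat \<times> nat \<Rightarrow> real) \<Rightarrow> real \<Rightarrow> real \<Rightarrow> real" where
  "peval c x y = (\<Sum>k\<in>supp2 c. c k * x ^ fst k * y ^ snd k)"

definition newton_polygon :: "(nat \<times> nat \<Rightarrow> real) \<Rightarrow> (real \<times> real) set" where
  "newton_polygon c = convex hull ((\<lambda>k. (real (fst k), real (snd k))) ` supp2 c)"

definition wdeg :: "nat \<times> nat \<Rightarrow> nat \<times> nat \<Rightarrow> nat" where
  "wdeg A k = fst A * fst k + snd A * snd k"

definition qh_part :: "(nat \<times> nat \<Rightarrow> real) \<Rightarrow> nat \<times> nat \<Rightarrow> nat \<Rightarrow> (nat \<times> nat \<Rightarrow> real)" where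
  "qh_part c A B = (\<lambda>k. if wdeg A k = B then c k else 0)"

definition main_form :: "(nat \<times> nat \<Rightarrow> real) \<Rightarrow> nat \<times> nat \<Rightarrow> (nat \<times> nat \<Rightarrow> real)" where
  "main_form c A = qh_part c A (Min (wdeg A ` supp2 c))"

text \<open>The values B_1^A < ... < B_r^A (as a 0-indexed sorted list) and the forms phi_i^A
  (phi_form c A i is the paper's phi_{i+1}^A).\<close>
definition levels :: "(nat \<times> nat \<Rightarrow> real) \<Rightarrow> nat \<times> nat \<Rightarrow> nat list" where
  "levels c A = sorted_list_of_set (wdeg A ` supp2 c)"

definition phi_form :: "(nat \<times> nat \<Rightarrow> real) \<Rightarrow> nat \<times> nat \<Rightarrow> nat \<Rightarrow> (nat \<times> nat \<Rightarrow> real)" where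
  "phi_form c A i = qh_part c A (levels c A ! i)"

definition char_poly :: "(nat \<times> nat \<Rightarrow> real) \<Rightarrow> nat \<times> nat \<Rightarrow> real poly" where
  "char_poly \<phi> A = (let a1 = Max (fst ` supp2 \<phi>) in
     (\<Sum>k\<in>supp2 \<phi>. monom (\<phi> k) ((a1 - fst k) div snd A)))"

definition N0sq :: "(nat \<times> nat) set" where
  "N0sq = {A. fst A \<ge> 1 \<and> snd A \<ge> 1 \<and> coprime (fst A) (snd A)}"

definition calA :: "(nat \<times> nat \<Rightarrow> real) \<Rightarrow> (nat \<times> nat) set" where
  "calA c = {A \<in> N0sq.
     card (supp2 (phi_form c A 0)) \<ge> 3 \<and>
     (\<forall>u::real. poly (char_poly (phi_form c A 0) A) u \<ge> 0) \<and>
     (\<exists>u::real. poly (char_poly (phi_form c A 0) A) u = 0)}"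

definition C1 :: "(nat \<times> nat \<Rightarrow> real) \<Rightarrow> nat \<times> nat \<Rightarrow> bool" where
  "C1 c A \<longleftrightarrow> (\<exists>x0 y0. peval (phi_form c A 0) x0 y0 = 0 \<and> peval (phi_form c A 1) x0 y0 < 0)"

definition C2 :: "(nat \<times> nat \<Rightarrow> real) \<Rightarrow> nat \<times> nat \<Rightarrow> bool" where
  "C2 c A \<longleftrightarrow> (\<forall>x y. peval (phi_form c A 0) x y = 0 \<and> x \<noteq> 0 \<and> y \<noteq> 0
                  \<longrightarrow> peval (phi_form c A 1) x y > 0)"

definition local_min_origin :: "(nat \<times> nat \<Rightarrow> real) \<Rightarrow> bool" where
  "local_min_origin c \<longleftrightarrow>
     (\<forall>\<^sub>F z in nhds (0::real, 0::real). peval c (fst z) (snd z) \<ge> peval c 0 0)"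

end

theory Submission
  imports Defs
begin

lemma supp_qh: "supp2 (qh_part c A B) = {k \<in> supp2 c. wdeg A k = B}"
  by (auto simp: supp2_def qh_part_def)

lemma peval_qh: "peval (qh_part c A B) x y = (\<Sum>k\<in>{k \<in> supp2 c. wdeg A k = B}. c k * x ^ fst k * y ^ snd k)"
  unfolding peval_def supp_qh by (rule sum.cong) (auto simp: qh_part_def)

lemma peval_super: assumes "finite T" "supp2 c \<subseteq> T"
  shows "peval c x y = (\<Sum>k\<in>T. c k * x ^ fst k * y ^ snd k)"
  unfolding peval_def
  by (rule sum.mono_neutral_left) (use assms in \<open>auto simp: supp2_def\<close>)

lemma scale_mono: "c * ((l::real) ^ A1 * x) ^ a * (l ^ A2 * y) ^ b
    = c * l ^ wdeg (A1, A2) (a, b) * x ^ a * y ^ b"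
  by (simp add: wdeg_def power_mult_distrib power_add power_mult mult_ac)

lemma peval_scale: "peval c (l ^ A1 * x) (l ^ A2 * y)
   = (\<Sum>k\<in>supp2 c. c k * l ^ wdeg (A1, A2) k * x ^ fst k * y ^ snd k)"
  unfolding peval_def by (rule sum.cong) (auto simp: wdeg_def power_mult_distrib power_add power_mult mult_ac)

lemma levels0:
  assumes "finite (supp2 c)" "supp2 c \<noteq> {}"
  shows "levels c A ! 0 = Min (wdeg A ` supp2 c)"
  using assms by (simp add: levels_def sorted_list_of_set_nonempty)

lemma levels1:
  assumes "finite (supp2 c)" "wdeg A ` supp2 c - {Min (wdeg A ` supp2 c)} \<noteq> {}"
  shows "levels c A ! 1 = Min (wdeg A ` supp2 c - {Min (wdeg A ` supp2 c)})"
proof -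
  have ne: "wdeg A ` supp2 c \<noteq> {}" using assms(2) by auto
  show ?thesis using assms
    by (simp add: levels_def sorted_list_of_set_nonempty[OF _ ne] sorted_list_of_set_nonempty[OF _ assms(2)])
qed

lemma phi0: assumes "finite (supp2 c)" "supp2 c \<noteq> {}"
  shows "phi_form c A 0 = main_form c A"
  using levels0[OF assms] by (simp add: phi_form_def main_form_def)

lemma lim_scaled:
  fixes c :: "nat \<times> nat \<Rightarrow> real"
  assumes "finite T" "\<forall>k\<in>T. B \<le> wdeg A k" "l \<longlonglongrightarrow> 0" "yh \<longlonglongrightarrow> y0"
  shows "(\<lambda>n. \<Sum>k\<in>T. c k * l n ^ (wdeg A k - B) * xs ^ fst k * yh n ^ snd k)
     \<longlonglongrightarrow> (\<Sum>k\<in>{k\<in>T. wdeg A k = B}. c k * xs ^ fst k * y0 ^ snd k)"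
proof -
  have "(\<lambda>n. \<Sum>k\<in>T. c k * l n ^ (wdeg A k - B) * xs ^ fst k * yh n ^ snd k)
     \<longlonglongrightarrow> (\<Sum>k\<in>T. c k * 0 ^ (wdeg A k - B) * xs ^ fst k * y0 ^ snd k)"
    apply (rule tendsto_sum) apply (intro tendsto_mult tendsto_const tendsto_power assms) done
  also have "(\<Sum>k\<in>T. c k * 0 ^ (wdeg A k - B) * xs ^ fst k * y0 ^ snd k)
     = (\<Sum>k\<in>T. if wdeg A k = B then c k * xs ^ fst k * y0 ^ snd k else 0)"
    by (rule sum.cong) (use assms(2) in auto)
  also have "\<dots> = (\<Sum>k\<in>{k\<in>T. wdeg A k = B}. c k * xs ^ fst k * y0 ^ snd k)"
    by (simp add: sum.inter_filter[OF assms(1)])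
  finally show ?thesis .
qed


lemma rounding:
  fixes s t :: real and T :: "(nat \<times> nat) set"
  assumes finT: "finite T" and s: "s > 0" and t: "t > 0"
    and lt: "\<forall>k\<in>T. k \<noteq> k0 \<longrightarrow> real (fst k0) * s + real (snd k0) * t < real (fst k) * s + real (snd k) * t"
  shows "\<exists>A1 A2. A1 \<ge> 1 \<and> A2 \<ge> 1 \<and> (\<forall>k\<in>T. k \<noteq> k0 \<longrightarrow> wdeg (A1,A2) k0 < wdeg (A1,A2) k)"
proof -
  define d where "d k = real (fst k) * s + real (snd k) * t - (real (fst k0) * s + real (snd k0) * t)" for k :: "nat \<times> nat"
  define C where "C = real (fst k0 + snd k0)"
  define N where "N = 1 + (\<Sum>k\<in>T-{k0}. C / d k)"
  have dpos: "d k > 0" if "k \<in> T" "k \<noteq> k0" for k using lt that by (simp add: d_def)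
  have C0: "C \<ge> 0" by (simp add: C_def)
  have q: "C / d k \<ge> 0" if "k \<in> T-{k0}" for k using dpos[of k] that C0 by simp
  have sum0: "(\<Sum>k\<in>T-{k0}. C / d k) \<ge> 0" by (rule sum_nonneg) (use q in auto)
  have N1: "N \<ge> 1" using sum0 by (simp add: N_def)
  have Nd: "N * d k > C" if "k \<in> T" "k \<noteq> k0" for k
  proof -
    have "C / d k \<le> (\<Sum>k\<in>T-{k0}. C / d k)"
      by (rule member_le_sum) (use that finT q in auto)
    hence "C / d k < N" by (simp add: N_def)
    thus ?thesis using dpos[OF that] by (simp add: divide_less_eq mult.commute)
  qed
  define A1 where "A1 = nat \<lceil>N * s\<rceil>"
  define A2 where "A2 = nat \<lceil>N * t\<rceil>"
  have Ns: "N * s > 0" and Nt: "N * t > 0" using N1 s t by auto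
  have rA1: "real A1 = of_int \<lceil>N * s\<rceil>" using Ns by (simp add: A1_def)
  have rA2: "real A2 = of_int \<lceil>N * t\<rceil>" using Nt by (simp add: A2_def)
  define e1 where "e1 = real A1 - N * s"
  define e2 where "e2 = real A2 - N * t"
  have e1: "0 \<le> e1" "e1 \<le> 1" unfolding e1_def rA1 by linarith+
  have e2: "0 \<le> e2" "e2 \<le> 1" unfolding e2_def rA2 by linarith+
  have A1p: "A1 \<ge> 1" using Ns e1 by (simp add: e1_def)
  have A2p: "A2 \<ge> 1" using Nt e2 by (simp add: e2_def)
  have "wdeg (A1,A2) k0 < wdeg (A1,A2) k" if "k \<in> T" "k \<noteq> k0" for k
  proof -
    have w: "real (wdeg (A1,A2) k) = real A1 * fst k + real A2 * snd k" for k
      by (simp add: wdeg_def)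
    have eq: "real (wdeg (A1,A2) k) - real (wdeg (A1,A2) k0)
        = N * d k + e1 * fst k + e2 * snd k - e1 * fst k0 - e2 * snd k0"
      unfolding w e1_def e2_def d_def by (simp add: algebra_simps)
    have "e1 * fst k \<ge> 0" "e2 * snd k \<ge> 0" using e1 e2 by auto
    moreover have "e1 * fst k0 \<le> fst k0" "e2 * snd k0 \<le> snd k0"
      using e1 e2 by (auto intro: mult_left_le_one_le)
    moreover have "N * d k > C" using Nd that .
    ultimately have "real (wdeg (A1,A2) k) - real (wdeg (A1,A2) k0) > 0"
      unfolding eq C_def by simp
    thus ?thesis by simp
  qed
  thus ?thesis using A1p A2p by blast
qed

lemma ev_ex: "eventually P sequentially \<Longrightarrow> \<exists>n. P n"
  by (auto simp: eventually_sequentially)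

definition goodseq :: "(nat \<times> nat \<Rightarrow> real) \<Rightarrow> (nat \<Rightarrow> real) \<Rightarrow> (nat \<Rightarrow> real) \<Rightarrow> bool" where
  "goodseq c X Y \<longleftrightarrow> (\<forall>n. X n \<noteq> 0 \<and> Y n \<noteq> 0 \<and> \<bar>X n\<bar> < 1 \<and> \<bar>Y n\<bar> < 1 \<and> peval c (X n) (Y n) < 0)
     \<and> X \<longlonglongrightarrow> 0 \<and> Y \<longlonglongrightarrow> 0"

lemma factor_min:
  fixes c :: "nat \<times> nat \<Rightarrow> real"
  assumes "\<forall>k\<in>T. B \<le> wdeg A k"
  shows "(\<Sum>k\<in>T. c k * l ^ wdeg A k * x ^ fst k * y ^ snd k)
     = l ^ B * (\<Sum>k\<in>T. c k * l ^ (wdeg A k - B) * x ^ fst k * y ^ snd k)"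
  unfolding sum_distrib_left
proof (rule sum.cong)
  fix k assume "k \<in> T"
  hence "l ^ wdeg A k = l ^ B * l ^ (wdeg A k - B)" using assms
    by (metis le_add_diff_inverse power_add)
  thus "c k * l ^ wdeg A k * x ^ fst k * y ^ snd k = l ^ B * (c k * l ^ (wdeg A k - B) * x ^ fst k * y ^ snd k)"
    by (simp add: mult_ac)
qed simp

lemma split_sum:
  fixes c :: "nat \<times> nat \<Rightarrow> real"
  assumes fin: "finite (supp2 c)"
    and B2le: "\<forall>k\<in>supp2 c. wdeg A k \<noteq> B1 \<longrightarrow> B2 \<le> wdeg A k"
  shows "(\<Sum>k\<in>supp2 c. c k * l ^ wdeg A k * x ^ fst k * y ^ snd k)
    = l ^ B1 * peval (qh_part c A B1) x y
      + l ^ B2 * (\<Sum>k\<in>{k\<in>supp2 c. wdeg A k \<noteq> B1}. c k * l ^ (wdeg A k - B2) * x ^ fst k * y ^ snd k)"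
proof -
  let ?f = "\<lambda>k. c k * l ^ wdeg A k * x ^ fst k * y ^ snd k"
  have un: "supp2 c = {k\<in>supp2 c. wdeg A k = B1} \<union> {k\<in>supp2 c. wdeg A k \<noteq> B1}" by auto
  have "sum ?f (supp2 c) = sum ?f {k\<in>supp2 c. wdeg A k = B1} + sum ?f {k\<in>supp2 c. wdeg A k \<noteq> B1}"
    by (subst un, rule sum.union_disjoint) (use fin in auto)
  moreover have "sum ?f {k\<in>supp2 c. wdeg A k = B1} = l ^ B1 * peval (qh_part c A B1) x y"
    unfolding peval_qh sum_distrib_left by (rule sum.cong) (auto simp: mult_ac)
  moreover have "sum ?f {k\<in>supp2 c. wdeg A k \<noteq> B1}
     = l ^ B2 * (\<Sum>k\<in>{k\<in>supp2 c. wdeg A k \<noteq> B1}. c k * l ^ (wdeg A k - B2) * x ^ fst k * y ^ snd k)"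
    by (rule factor_min) (use B2le in auto)
  ultimately show ?thesis by simp
qed

lemma Sne_of_neg: "peval c x y < 0 \<Longrightarrow> supp2 c \<noteq> {}"
  by (auto simp: peval_def)

definition Lg :: "(nat \<Rightarrow> real) \<Rightarrow> (nat \<Rightarrow> real) \<Rightarrow> nat \<times> nat \<Rightarrow> nat \<Rightarrow> real" where
  "Lg X Y k n = real (fst k) * (- ln \<bar>X n\<bar>) + real (snd k) * (- ln \<bar>Y n\<bar>)"

lemma mono_exp:
  assumes "X n \<noteq> 0" "Y n \<noteq> 0"
  shows "\<bar>X n\<bar> ^ fst k * \<bar>Y n\<bar> ^ snd k = exp (- Lg X Y k n)"
proof -
  have "exp (- Lg X Y k n) = exp (real (fst k) * ln \<bar>X n\<bar>) * exp (real (snd k) * ln \<bar>Y n\<bar>)"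
    by (simp add: Lg_def exp_add[symmetric])
  also have "\<dots> = exp (ln \<bar>X n\<bar>) ^ fst k * exp (ln \<bar>Y n\<bar>) ^ snd k"
    by (simp add: exp_of_nat_mult)
  also have "\<dots> = \<bar>X n\<bar> ^ fst k * \<bar>Y n\<bar> ^ snd k" using assms by simp
  finally show ?thesis by simp
qed

lemma bounded_log_contra:
  fixes X f :: "nat \<Rightarrow> real"
  assumes X0: "X \<longlonglongrightarrow> 0" and nz: "\<forall>n. X n \<noteq> 0" and fL: "f \<longlonglongrightarrow> L"
    and le: "\<forall>n. - ln \<bar>X n\<bar> \<le> f n"
  shows False
proof -
  have e1: "eventually (\<lambda>n. f n < L + 1) sequentially" using order_tendstoD(2)[OF fL] by simp
  have "(\<lambda>n. \<bar>X n\<bar>) \<longlonglongrightarrow> 0" using X0 by (simp add: tendsto_rabs_zero_iff)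
  hence e2: "eventually (\<lambda>n. \<bar>X n\<bar> < exp (- (L + 1))) sequentially"
    using order_tendstoD(2) by fastforce
  obtain n where "f n < L + 1" "\<bar>X n\<bar> < exp (- (L + 1))"
    using eventually_conj[OF e1 e2] using ev_ex by blast
  moreover have "- ln \<bar>X n\<bar> \<le> f n" using le by simp
  ultimately have "- (L + 1) < ln \<bar>X n\<bar>" by linarith
  hence "exp (- (L + 1)) < exp (ln \<bar>X n\<bar>)" by simp
  thus False using nz \<open>\<bar>X n\<bar> < exp (- (L + 1))\<close> by simp
qed

lemma copr:
  assumes "P > (0::nat)" "Q > 0"
  shows "(Q div gcd P Q, P div gcd P Q) \<in> N0sq \<and> real P = real (gcd P Q) * real (P div gcd P Q)
     \<and> real Q = real (gcd P Q) * real (Q div gcd P Q) \<and> gcd P Q > 0"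
proof -
  have g0: "gcd P Q > 0" using assms by simp
  have cp: "coprime (Q div gcd Q P) (P div gcd Q P)" using assms by (intro div_gcd_coprime) auto
  have eP: "P = gcd P Q * (P div gcd P Q)" by simp
  have eQ: "Q = gcd P Q * (Q div gcd P Q)" by simp
  have p1: "P div gcd P Q \<ge> 1" using assms eP by (metis less_one mult_0_right not_le neq0_conv)
  have q1: "Q div gcd P Q \<ge> 1" using assms eQ by (metis less_one mult_0_right not_le neq0_conv)
  show ?thesis using cp p1 q1 g0 eP eQ
    by (auto simp: N0sq_def gcd.commute simp flip: of_nat_mult)
qed

lemma multi_subseq:
  fixes f :: "'i \<Rightarrow> nat \<Rightarrow> real"
  assumes "finite I" "\<forall>i\<in>I. bounded (range (f i))"
  shows "\<exists>r. strict_mono r \<and> (\<forall>i\<in>I. convergent (\<lambda>n. f i (r n)))"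
  using assms
proof (induction I rule: finite_induct)
  case empty
  show ?case by (rule exI[of _ id]) (simp add: strict_mono_def)
next
  case (insert i I)
  then obtain r where r: "strict_mono r" "\<forall>j\<in>I. convergent (\<lambda>n. f j (r n))" by auto
  have "bounded (range (\<lambda>n. f i (r n)))"
    by (rule bounded_subset[of "range (f i)"]) (use insert.prems in auto)
  then obtain l r' where r': "strict_mono r'" "((\<lambda>n. f i (r n)) \<circ> r') \<longlonglongrightarrow> l"
    using bounded_imp_convergent_subsequence by blast
  have sm: "strict_mono (r \<circ> r')" using r(1) r'(1) by (rule strict_mono_o)
  have "convergent (\<lambda>n. f j ((r \<circ> r') n))" if jI: "j \<in> insert i I" for j
  proof (cases "j = i")
    case True thus ?thesis using r'(2) by (auto simp: convergent_def o_def)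
  next
    case False
    then obtain L where "(\<lambda>n. f j (r n)) \<longlonglongrightarrow> L" using r(2) jI False by (auto simp: convergent_def)
    from LIMSEQ_subseq_LIMSEQ[OF this r'(1)] show ?thesis by (auto simp: convergent_def o_def)
  qed
  thus ?case using sm by blast
qed

lemma goodseq_sub:
  assumes "goodseq c X Y" "strict_mono r"
  shows "goodseq c (\<lambda>n. X (r n)) (\<lambda>n. Y (r n))"
  using assms LIMSEQ_subseq_LIMSEQ[of X 0 r] LIMSEQ_subseq_LIMSEQ[of Y 0 r]
  by (auto simp: goodseq_def o_def)

locale PMloc =
  fixes c :: "nat \<times> nat \<Rightarrow> real"
  assumes poly: "is_poly2 c"
    and mn: "\<forall>A1 A2 x y. A1 \<ge> 1 \<and> A2 \<ge> 1 \<longrightarrow> peval (main_form c (A1, A2)) x y \<ge> 0"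
begin

lemma finS: "finite (supp2 c)" using poly by (simp add: is_poly2_def)

lemma vertex_pos:
  assumes "A1 \<ge> 1" "A2 \<ge> 1" "k0 \<in> supp2 c"
    "\<forall>k\<in>supp2 c. k \<noteq> k0 \<longrightarrow> wdeg (A1,A2) k0 < wdeg (A1,A2) k"
  shows "c k0 * x ^ fst k0 * y ^ snd k0 \<ge> 0"
proof -
  have m: "Min (wdeg (A1,A2) ` supp2 c) = wdeg (A1,A2) k0"
    using assms(3,4) finS by (intro Min_eqI) force+
  have f: "{k \<in> supp2 c. wdeg (A1,A2) k = wdeg (A1,A2) k0} = {k0}"
    using assms(3,4) by force
  have "peval (main_form c (A1,A2)) x y = c k0 * x ^ fst k0 * y ^ snd k0"
    unfolding main_form_def m peval_qh f by simp
  then show ?thesis using mn assms(1,2) by metis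
qed

lemma vertex_even:
  assumes "A1 \<ge> 1" "A2 \<ge> 1" "k0 \<in> supp2 c"
    "\<forall>k\<in>supp2 c. k \<noteq> k0 \<longrightarrow> wdeg (A1,A2) k0 < wdeg (A1,A2) k"
  shows "c k0 > 0 \<and> even (fst k0) \<and> even (snd k0)"
proof -
  have ne: "c k0 \<noteq> 0" using assms(3) by (simp add: supp2_def)
  have p: "c k0 \<ge> 0" using vertex_pos[OF assms, of 1 1] by simp
  hence pos: "c k0 > 0" using ne by simp
  have "c k0 * (-1) ^ fst k0 \<ge> 0" using vertex_pos[OF assms, of "-1" 1] by simp
  hence "(-1::real) ^ fst k0 \<ge> 0" using pos by (simp add: zero_le_mult_iff)
  hence e1: "even (fst k0)" by (cases "even (fst k0)") auto
  have "c k0 * (-1) ^ snd k0 \<ge> 0" using vertex_pos[OF assms, of 1 "-1"] by simp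
  hence "(-1::real) ^ snd k0 \<ge> 0" using pos by (simp add: zero_le_mult_iff)
  hence e2: "even (snd k0)" by (cases "even (snd k0)") auto
  show ?thesis using pos e1 e2 by simp
qed


lemma even_even_not_coprime: "even (a::nat) \<Longrightarrow> even b \<Longrightarrow> coprime a b \<Longrightarrow> False"
  by (metis coprime_common_divisor_nat dvd_refl numeral_eq_one_iff semiring_norm(85))

lemma in_calA:
  assumes A: "A \<in> N0sq" and ne: "supp2 c \<noteq> {}"
    and x0: "x0 \<noteq> 0" and y0: "y0 \<noteq> 0" and z: "peval (main_form c A) x0 y0 = 0"
  shows "A \<in> calA c"
proof -
  obtain A1 A2 where AA: "A = (A1, A2)" by (cases A)
  have A1: "A1 \<ge> 1" and A2: "A2 \<ge> 1" and cop: "coprime A1 A2" using A by (auto simp: N0sq_def AA)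
  define B1 where "B1 = Min (wdeg A ` supp2 c)"
  define F where "F = {k \<in> supp2 c. wdeg A k = B1}"
  have finF: "finite F" using finS by (simp add: F_def)
  have B1in: "B1 \<in> wdeg A ` supp2 c" using finS ne by (simp add: B1_def)
  have Fne: "F \<noteq> {}" using B1in by (auto simp: F_def)
  have B1le: "\<And>k. k \<in> supp2 c \<Longrightarrow> B1 \<le> wdeg A k" using finS by (simp add: B1_def)
  have mf: "main_form c A = qh_part c A B1" by (simp add: main_form_def B1_def)
  have suppF: "supp2 (main_form c A) = F" by (simp add: mf supp_qh F_def)
  define a1 where "a1 = Max (fst ` F)"
  have "a1 \<in> fst ` F" using finF Fne by (simp add: a1_def)
  then obtain k1 where k1F: "k1 \<in> F" and k1a: "fst k1 = a1" by auto
  define b1 where "b1 = snd k1"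
  have k1eq: "k1 = (a1, b1)" using k1a by (simp add: b1_def prod_eq_iff)
  have alph_le: "\<And>k. k \<in> F \<Longrightarrow> fst k \<le> a1" using finF by (simp add: a1_def)
  have k1S: "k1 \<in> supp2 c" using k1F by (simp add: F_def)
  have wk: "\<And>k. k \<in> F \<Longrightarrow> A1 * fst k + A2 * snd k = A1 * a1 + A2 * b1"
    using k1F k1a by (auto simp: F_def wdeg_def AA b1_def)
  define j where "j k = (a1 - fst k) div A2" for k :: "nat \<times> nat"
  have jprop: "a1 = fst k + A2 * j k \<and> snd k = b1 + A1 * j k" if kF: "k \<in> F" for k
  proof -
    have le: "fst k \<le> a1" using alph_le kF .
    have e: "A1 * fst k + A2 * snd k = A1 * a1 + A2 * b1" using wk kF .
    have p: "A1 * a1 = A1 * fst k + A1 * (a1 - fst k)" using le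
      by (metis add_mult_distrib2 le_add_diff_inverse)
    have e1: "A2 * snd k = A2 * b1 + A1 * (a1 - fst k)" using e p by linarith
    have bge: "b1 \<le> snd k"
    proof (rule ccontr)
      assume "\<not> b1 \<le> snd k"
      hence "A2 * snd k < A2 * b1" using A2 by simp
      thus False using e1 by linarith
    qed
    have e2: "A2 * (snd k - b1) = A1 * (a1 - fst k)" using e1 by (simp add: diff_mult_distrib2)
    have "A2 dvd A1 * (a1 - fst k)" using e2 by (metis dvd_triv_left)
    hence dv: "A2 dvd (a1 - fst k)" using cop
      by (simp add: coprime_commute coprime_dvd_mult_right_iff)
    then obtain m where m: "a1 - fst k = A2 * m" by (auto simp: dvd_def)
    have jm: "j k = m" using A2 m by (simp add: j_def)
    have "A2 * (snd k - b1) = A2 * (A1 * m)" using e2 m by (simp add: mult_ac)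
    hence "snd k - b1 = A1 * m" using A2 by simp
    hence h1: "snd k = b1 + A1 * m" using bge by linarith
    have h2: "a1 = fst k + A2 * m" using le m by linarith
    show ?thesis using h1 h2 jm by simp
  qed
  have j0: "j k = 0 \<longleftrightarrow> k = k1" if "k \<in> F" for k
  proof
    assume "j k = 0" thus "k = k1" using jprop[OF that] k1eq by (simp add: prod_eq_iff)
  next
    assume "k = k1" thus "j k = 0" using k1a by (simp add: j_def)
  qed
  have E2: "(x::real) ^ fst k * y ^ snd k = x ^ a1 * y ^ b1 * (y ^ A1 / x ^ A2) ^ j k"
    if "k \<in> F" "x \<noteq> 0" for k x y
  proof -
    have "x ^ a1 = x ^ fst k * (x ^ A2) ^ j k" using jprop[OF that(1)]
      by (metis power_add power_mult)
    moreover have "y ^ snd k = y ^ b1 * (y ^ A1) ^ j k" using jprop[OF that(1)]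
      by (metis power_add power_mult)
    ultimately show ?thesis using that(2) by (simp add: power_divide field_simps)
  qed
  define g where "g u = (\<Sum>k\<in>F. c k * u ^ j k)" for u :: real
  have gpoly: "poly (char_poly (phi_form c A 0) A) u = g u" for u
  proof -
    have e0: "phi_form c A 0 = main_form c A" using phi0[OF finS ne] .
    have mfk: "main_form c A k = c k" if "k \<in> F" for k using that by (simp add: mf qh_part_def F_def)
    have "char_poly (main_form c A) A = (\<Sum>k\<in>F. monom (main_form c A k) ((a1 - fst k) div A2))"
      unfolding char_poly_def Let_def suppF a1_def[symmetric] by (simp add: AA)
    then show ?thesis unfolding e0 g_def
      by (auto simp: poly_sum poly_monom mfk j_def intro!: sum.cong)
  qed
  have peval_g: "peval (main_form c A) x y = x ^ a1 * y ^ b1 * g (y ^ A1 / x ^ A2)"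
    if "x \<noteq> 0" for x y
  proof -
    have "peval (main_form c A) x y = (\<Sum>k\<in>F. c k * x ^ fst k * y ^ snd k)"
      by (simp add: mf peval_qh F_def)
    also have "\<dots> = (\<Sum>k\<in>F. x ^ a1 * y ^ b1 * (c k * (y ^ A1 / x ^ A2) ^ j k))"
      by (rule sum.cong) (auto simp: E2[OF _ that] mult_ac)
    finally show ?thesis by (simp add: g_def sum_distrib_left)
  qed
  define M where "M = Max (fst ` supp2 c) + 2"
  have fM: "fst k < M" if "k \<in> supp2 c" for k
  proof -
    have "fst k \<le> Max (fst ` supp2 c)" using finS that by simp
    thus ?thesis by (simp add: M_def)
  qed
  have M2: "M \<ge> 2" by (simp add: M_def)
  define A' where "A' = (M * A1 - 1, M * A2)"
  have MA1: "M * A1 \<ge> 2" using M2 A1 by (metis mult_le_mono nat_mult_1_right)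
  have wA': "wdeg A' k + fst k = M * wdeg A k" for k
  proof -
    have "1 * fst k \<le> (M * A1) * fst k" by (rule mult_le_mono1) (use MA1 in linarith)
    hence "(M * A1 - 1) * fst k + fst k = M * A1 * fst k"
      by (simp add: diff_mult_distrib)
    thus ?thesis by (simp add: wdeg_def A'_def AA algebra_simps)
  qed
  have uniq: "\<forall>k\<in>supp2 c. k \<noteq> k1 \<longrightarrow> wdeg (M * A1 - 1, M * A2) k1 < wdeg (M * A1 - 1, M * A2) k"
  proof (intro ballI impI)
    fix k assume kS: "k \<in> supp2 c" and kk: "k \<noteq> k1"
    have w1: "wdeg A' k1 + a1 = M * B1" using wA'[of k1] k1F k1a by (simp add: F_def)
    show "wdeg (M * A1 - 1, M * A2) k1 < wdeg (M * A1 - 1, M * A2) k"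
    proof (cases "k \<in> F")
      case True
      have "fst k \<noteq> a1" using j0[OF True] kk jprop[OF True] A2 by auto
      hence "fst k < a1" using alph_le[OF True] by simp
      moreover have "wdeg A' k + fst k = M * B1" using wA'[of k] True by (simp add: F_def)
      ultimately show ?thesis using w1 by (simp add: A'_def)
    next
      case False
      hence "wdeg A k \<ge> B1 + 1" using B1le[OF kS] kS by (simp add: F_def)
      hence "M * wdeg A k \<ge> M * B1 + M" by (metis add_mult_distrib2 mult.right_neutral mult_le_mono2)
      moreover have "fst k < M" using fM[OF kS] .
      moreover have "wdeg A' k + fst k = M * wdeg A k" using wA' .
      ultimately show ?thesis using w1 by (simp add: A'_def)
    qed
  qed
  have ve: "c k1 > 0 \<and> even a1 \<and> even b1"
  proof -
    have "M * A1 - 1 \<ge> 1" using MA1 by linarith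
    moreover have "M * A2 \<ge> 1" using M2 A2 by (metis le_trans mult_le_mono nat_mult_1_right one_le_numeral)
    ultimately show ?thesis using vertex_even[OF _ _ k1S uniq] k1a b1_def by simp
  qed
  have pre_pos: "x ^ a1 * y ^ b1 > 0" if "x \<noteq> 0" "y \<noteq> 0" for x y :: real
    using ve that by (simp add: zero_less_power_eq zero_less_mult_iff)
  have g0: "g 0 = c k1"
  proof -
    have t: "c k * 0 ^ j k = (if k = k1 then c k else 0)" if "k \<in> F" for k
      using j0[OF that] by (cases "k = k1") auto
    have "g 0 = (\<Sum>k\<in>F. if k = k1 then c k else 0)"
      unfolding g_def by (rule sum.cong) (simp_all add: t)
    also have "\<dots> = c k1" using k1F finF by simp
    finally show ?thesis .
  qed
  have gnn: "g u \<ge> 0" for u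
  proof (cases "u = 0")
    case True thus ?thesis using g0 ve by simp
  next
    case False
    obtain x y :: real where xy: "x \<noteq> 0" "y \<noteq> 0" "y ^ A1 / x ^ A2 = u"
    proof (cases "odd A1")
      case True
      show ?thesis
        by (rule that[of 1 "root A1 u"]) (use True False A1 in \<open>auto simp: odd_real_root_pow\<close>)
    next
      case False2: False
      hence oA2: "odd A2" using cop even_even_not_coprime by blast
      show ?thesis
        by (rule that[of "root A2 (1/u)" 1]) (use oA2 False A2 in \<open>auto simp: odd_real_root_pow\<close>)
    qed
    have "0 \<le> peval (main_form c A) x y" using mn A1 A2 AA by auto
    also have "\<dots> = x ^ a1 * y ^ b1 * g u" using peval_g[OF xy(1)] xy(3) by simp
    finally show ?thesis using pre_pos[OF xy(1,2)] by (simp add: zero_le_mult_iff)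
  qed
  define u0 where "u0 = y0 ^ A1 / x0 ^ A2"
  have gu0: "g u0 = 0"
    using z peval_g[OF x0] pre_pos[OF x0 y0] x0 y0 by (simp add: u0_def)
  have u0nz: "u0 \<noteq> 0" using x0 y0 by (simp add: u0_def)
  have card3: "card F \<ge> 3"
  proof (rule ccontr)
    assume nc: "\<not> 3 \<le> card F"
    have "card F \<ge> 1" using finF Fne by (simp add: Suc_le_eq card_gt_0_iff)
    then consider "card F = 1" | "card F = 2" using nc by linarith
    then show False
    proof cases
      case 1
      then obtain k where "F = {k}" by (auto simp: card_Suc_eq)
      hence Fk: "F = {k1}" using k1F by auto
      have "peval (main_form c A) x0 y0 = c k1 * x0 ^ a1 * y0 ^ b1"
        by (simp add: mf peval_qh F_def[symmetric] Fk k1eq)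
      moreover have "c k1 * x0 ^ a1 * y0 ^ b1 \<noteq> 0" using ve x0 y0 by simp
      ultimately show False using z by simp
    next
      case 2
      then obtain ka kb where Fab: "F = {ka, kb}" "ka \<noteq> kb" by (auto simp: card_2_iff)
      have "\<exists>k2. F = {k1, k2} \<and> k2 \<noteq> k1"
      proof (cases "k1 = ka")
        case True thus ?thesis using Fab by (intro exI[of _ kb]) auto
      next
        case False hence "k1 = kb" using Fab k1F by auto
        thus ?thesis using Fab by (intro exI[of _ ka]) auto
      qed
      then obtain k2 where F2: "F = {k1, k2}" "k2 \<noteq> k1" by blast
      have k2F: "k2 \<in> F" using F2 by auto
      have j2: "j k2 \<ge> 1" using j0[OF k2F] F2(2) by simp
      have gform: "g u = c k1 + c k2 * u ^ j k2" for u
        unfolding g_def F2(1) using F2(2) j0[OF k1F] by simp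
      have "c k2 * u0 ^ j k2 = - c k1" using gu0 gform[of u0] by simp
      hence h: "c k2 * (u0 ^ j k2 * 2 ^ j k2) = - c k1 * 2 ^ j k2" by (metis mult.assoc)
      have "g (2 * u0) = c k1 * (1 - 2 ^ j k2)"
        by (simp add: gform power_mult_distrib algebra_simps h)
      moreover have "(2::real) ^ j k2 \<ge> 2" using j2
        by (metis power_increasing power_one_right one_le_numeral)
      ultimately have "g (2 * u0) < 0" using ve by (simp add: mult_pos_neg)
      thus False using gnn[of "2 * u0"] by simp
    qed
  qed
  have cardphi: "card (supp2 (phi_form c A 0)) \<ge> 3"
    using card3 phi0[OF finS ne] suppF by simp
  show ?thesis unfolding calA_def using A cardphi gpoly gnn gu0 by auto
qed

lemma edge:
  assumes hC2: "\<forall>A\<in>calA c. C2 c A" and gs: "goodseq c X Y"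
    and AN: "(A1, A2) \<in> N0sq"
    and sx: "\<forall>n. sgn (X n) = \<sigma>" and sy: "\<forall>n. sgn (Y n) = \<tau>"
    and LL: "(\<lambda>n. real A2 * (- ln \<bar>X n\<bar>) - real A1 * (- ln \<bar>Y n\<bar>)) \<longlonglongrightarrow> L"
  shows False
proof -
  have Xnz: "X n \<noteq> 0" and Ynz: "Y n \<noteq> 0" and pneg: "peval c (X n) (Y n) < 0" for n
    using gs by (auto simp: goodseq_def)
  have X0: "X \<longlonglongrightarrow> 0" using gs by (simp add: goodseq_def)
  have A1: "A1 \<ge> 1" and A2: "A2 \<ge> 1" using AN by (auto simp: N0sq_def)
  have Sne: "supp2 c \<noteq> {}" using Sne_of_neg[OF pneg[of 0]] .
  have sig: "\<sigma> \<noteq> 0" using sx Xnz[of 0] by (metis sgn_0_0)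
  have tau: "\<tau> \<noteq> 0" using sy Ynz[of 0] by (metis sgn_0_0)
  define l where "l n = \<bar>X n\<bar> powr (1 / real A1)" for n
  have lpos: "l n > 0" for n using Xnz by (simp add: l_def)
  have lA: "l n ^ m = \<bar>X n\<bar> powr (real m / real A1)" for n m
  proof -
    have "l n ^ m = l n powr real m" using lpos by (simp add: powr_realpow)
    also have "\<dots> = \<bar>X n\<bar> powr (real m / real A1)" by (simp add: l_def powr_powr)
    finally show ?thesis .
  qed
  have lA1: "l n ^ A1 = \<bar>X n\<bar>" for n using lA[of n A1] A1 Xnz by simp
  have l0: "l \<longlonglongrightarrow> 0"
    unfolding l_def
    by (rule tendsto_zero_powrI) (use X0 A1 in \<open>auto simp: tendsto_rabs_zero_iff\<close>)
  define yh where "yh n = Y n / l n ^ A2" for n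
  have Xeq: "X n = l n ^ A1 * \<sigma>" for n using lA1[of n] sx by (metis mult.commute sgn_mult_abs)
  have Yeq: "Y n = l n ^ A2 * yh n" for n using lpos[of n] by (simp add: yh_def)
  have yh_eq: "yh n = \<tau> * exp ((real A2 * (- ln \<bar>X n\<bar>) - real A1 * (- ln \<bar>Y n\<bar>)) / real A1)" for n
  proof -
    have e: "exp (ln \<bar>Y n\<bar>) = \<bar>Y n\<bar>" using Ynz[of n] by simp
    have "Y n = \<tau> * exp (ln \<bar>Y n\<bar>)" unfolding e using sy by (metis sgn_mult_abs)
    moreover have "l n ^ A2 = exp (real A2 / real A1 * ln \<bar>X n\<bar>)"
      using lA[of n A2] Xnz[of n] by (simp add: powr_def)
    moreover have "(real A2 * (- ln \<bar>X n\<bar>) - real A1 * (- ln \<bar>Y n\<bar>)) / real A1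
        = ln \<bar>Y n\<bar> - real A2 / real A1 * ln \<bar>X n\<bar>" using A1 by (simp add: field_simps)
    ultimately show ?thesis by (simp add: yh_def exp_diff)
  qed
  define y0 where "y0 = \<tau> * exp (L / real A1)"
  have yh_lim: "yh \<longlonglongrightarrow> y0"
    unfolding yh_eq[abs_def] y0_def by (intro tendsto_intros LL) (use A1 in simp)
  have y0nz: "y0 \<noteq> 0" using tau by (simp add: y0_def)
  define W where "W = wdeg (A1, A2) ` supp2 c"
  define B1 where "B1 = Min W"
  have finW: "finite W" using finS by (simp add: W_def)
  have B1le: "\<forall>k\<in>supp2 c. B1 \<le> wdeg (A1, A2) k" using finW by (auto simp: B1_def W_def)
  have pscale: "peval c (X n) (Y n) = (\<Sum>k\<in>supp2 c. c k * l n ^ wdeg (A1,A2) k * \<sigma> ^ fst k * yh n ^ snd k)" for n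
  proof -
    have "peval c (X n) (Y n) = peval c (l n ^ A1 * \<sigma>) (l n ^ A2 * yh n)" using Xeq Yeq by metis
    thus ?thesis by (simp add: peval_scale)
  qed
  define F1 where "F1 n = (\<Sum>k\<in>supp2 c. c k * l n ^ (wdeg (A1,A2) k - B1) * \<sigma> ^ fst k * yh n ^ snd k)" for n
  have pF1: "peval c (X n) (Y n) = l n ^ B1 * F1 n" for n
    unfolding pscale F1_def by (rule factor_min) (use B1le in auto)
  have F1neg: "F1 n < 0" for n using pneg[of n] pF1[of n] lpos[of n]
    by (metis mult_less_0_iff zero_less_power not_less_iff_gr_or_eq)
  have mfq: "main_form c (A1, A2) = qh_part c (A1, A2) B1" by (simp add: main_form_def B1_def W_def)
  have F1lim: "F1 \<longlonglongrightarrow> peval (main_form c (A1,A2)) \<sigma> y0"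
    unfolding F1_def[abs_def] mfq peval_qh
    by (rule lim_scaled) (use finS B1le l0 yh_lim in auto)
  have "peval (main_form c (A1,A2)) \<sigma> y0 \<le> 0"
    by (rule tendsto_upperbound[OF F1lim]) (use F1neg in \<open>auto intro!: always_eventually less_imp_le\<close>)
  moreover have "peval (main_form c (A1,A2)) \<sigma> y0 \<ge> 0" using mn A1 A2 by auto
  ultimately have z: "peval (main_form c (A1,A2)) \<sigma> y0 = 0" by simp
  have inA: "(A1, A2) \<in> calA c" by (rule in_calA[OF AN Sne sig y0nz z])
  have ph0: "phi_form c (A1,A2) 0 = main_form c (A1,A2)" using phi0[OF finS Sne] .
  have pos2: "peval (phi_form c (A1,A2) 1) \<sigma> y0 > 0"
    using hC2 inA z sig y0nz ph0 by (auto simp: C2_def)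
  show False
  proof (cases "W - {B1} = {}")
    case True
    have allB1: "\<forall>k\<in>supp2 c. wdeg (A1,A2) k = B1" using True by (auto simp: W_def)
    have "F1 0 = peval (main_form c (A1,A2)) \<sigma> (yh 0)"
      unfolding F1_def mfq peval_qh using allB1 by (intro sum.cong) auto
    thus False using mn A1 A2 F1neg[of 0] by (metis not_le)
  next
    case False
    define B2 where "B2 = Min (W - {B1})"
    have lev1: "levels c (A1,A2) ! 1 = B2"
      using levels1[OF finS] False by (simp add: B2_def B1_def W_def)
    have ph1: "phi_form c (A1,A2) 1 = qh_part c (A1,A2) B2" unfolding phi_form_def lev1 ..
    have B2in: "B2 \<in> W - {B1}" unfolding B2_def using False finW by (intro Min_in) auto
    have B2le: "\<forall>k\<in>supp2 c. wdeg (A1,A2) k \<noteq> B1 \<longrightarrow> B2 \<le> wdeg (A1,A2) k"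
      using finW by (auto simp: B2_def W_def)
    define F2 where "F2 n = (\<Sum>k\<in>{k\<in>supp2 c. wdeg (A1,A2) k \<noteq> B1}. c k * l n ^ (wdeg (A1,A2) k - B2) * \<sigma> ^ fst k * yh n ^ snd k)" for n
    have pF2: "peval c (X n) (Y n) = l n ^ B1 * peval (main_form c (A1,A2)) \<sigma> (yh n) + l n ^ B2 * F2 n" for n
      unfolding pscale F2_def mfq by (rule split_sum[OF finS B2le])
    have sets: "{k \<in> {k\<in>supp2 c. wdeg (A1,A2) k \<noteq> B1}. wdeg (A1,A2) k = B2} = {k\<in>supp2 c. wdeg (A1,A2) k = B2}"
      using B2in by auto
    have F2lim: "F2 \<longlonglongrightarrow> peval (phi_form c (A1,A2) 1) \<sigma> y0"
      unfolding F2_def[abs_def] ph1 peval_qh sets[symmetric]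
      by (rule lim_scaled) (use finS B2le l0 yh_lim in auto)
    have "eventually (\<lambda>n. F2 n > 0) sequentially"
      using order_tendstoD(1)[OF F2lim pos2] .
    then obtain n where Fp: "F2 n > 0" using ev_ex by blast
    have "peval (main_form c (A1,A2)) \<sigma> (yh n) \<ge> 0" using mn A1 A2 by auto
    hence h1: "l n ^ B1 * peval (main_form c (A1,A2)) \<sigma> (yh n) \<ge> 0" using lpos[of n] by simp
    have h2: "l n ^ B2 * F2 n > 0" using lpos[of n] Fp by simp
    have "peval c (X n) (Y n) > 0" using pF2[of n] h1 h2 by linarith
    thus False using pneg[of n] by simp
  qed
qed

lemma vertexcase:
  assumes gs: "goodseq c X Y" and k0S: "k0 \<in> supp2 c"
    and rat: "\<forall>k\<in>supp2 c. k \<noteq> k0 \<longrightarrow> (\<lambda>n. exp (- (Lg X Y k n - Lg X Y k0 n))) \<longlonglongrightarrow> 0"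
  shows False
proof -
  have Xnz: "X n \<noteq> 0" and Ynz: "Y n \<noteq> 0" and pneg: "peval c (X n) (Y n) < 0"
    and Xlt: "\<bar>X n\<bar> < 1" and Ylt: "\<bar>Y n\<bar> < 1" for n
    using gs by (auto simp: goodseq_def)
  have ev: "eventually (\<lambda>n. \<forall>k\<in>supp2 c - {k0}. exp (- (Lg X Y k n - Lg X Y k0 n)) < 1) sequentially"
  proof (rule eventually_ball_finite)
    show "finite (supp2 c - {k0})" using finS by simp
    show "\<forall>k\<in>supp2 c - {k0}. eventually (\<lambda>n. exp (- (Lg X Y k n - Lg X Y k0 n)) < 1) sequentially"
    proof
      fix k assume "k \<in> supp2 c - {k0}"
      hence "(\<lambda>n. exp (- (Lg X Y k n - Lg X Y k0 n))) \<longlonglongrightarrow> 0" using rat by auto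
      from order_tendstoD(2)[OF this, of 1] show "eventually (\<lambda>n. exp (- (Lg X Y k n - Lg X Y k0 n)) < 1) sequentially" by simp
    qed
  qed
  then obtain n0 where n0: "\<forall>k\<in>supp2 c - {k0}. exp (- (Lg X Y k n0 - Lg X Y k0 n0)) < 1"
    using ev_ex by blast
  have s: "- ln \<bar>X n0\<bar> > 0" using Xnz[of n0] Xlt[of n0] by simp
  have t: "- ln \<bar>Y n0\<bar> > 0" using Ynz[of n0] Ylt[of n0] by simp
  have lt: "\<forall>k\<in>supp2 c. k \<noteq> k0 \<longrightarrow> real (fst k0) * (- ln \<bar>X n0\<bar>) + real (snd k0) * (- ln \<bar>Y n0\<bar>)
       < real (fst k) * (- ln \<bar>X n0\<bar>) + real (snd k) * (- ln \<bar>Y n0\<bar>)"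
  proof (intro ballI impI)
    fix k assume "k \<in> supp2 c" "k \<noteq> k0"
    hence "exp (- (Lg X Y k n0 - Lg X Y k0 n0)) < 1" using n0 by auto
    hence "Lg X Y k0 n0 < Lg X Y k n0" by simp
    thus "real (fst k0) * (- ln \<bar>X n0\<bar>) + real (snd k0) * (- ln \<bar>Y n0\<bar>)
       < real (fst k) * (- ln \<bar>X n0\<bar>) + real (snd k) * (- ln \<bar>Y n0\<bar>)" by (simp add: Lg_def)
  qed
  obtain A1 A2 where A: "A1 \<ge> 1" "A2 \<ge> 1" "\<forall>k\<in>supp2 c. k \<noteq> k0 \<longrightarrow> wdeg (A1,A2) k0 < wdeg (A1,A2) k"
    using rounding[OF finS s t lt] by blast
  have vp: "c k0 * x ^ fst k0 * y ^ snd k0 \<ge> 0" for x y using vertex_pos[OF A(1,2) k0S A(3)] .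
  have ck0: "c k0 \<noteq> 0" using k0S by (simp add: supp2_def)
  have m0pos: "c k0 * X n ^ fst k0 * Y n ^ snd k0 > 0" for n
    using vp[of "X n" "Y n"] ck0 Xnz[of n] Ynz[of n] by (simp add: order.order_iff_strict)
  define P0 where "P0 n = exp (- Lg X Y k0 n)" for n
  have P0pos: "P0 n > 0" for n by (simp add: P0_def)
  have t0: "c k0 * X n ^ fst k0 * Y n ^ snd k0 / P0 n = \<bar>c k0\<bar>" for n
  proof -
    have "c k0 * X n ^ fst k0 * Y n ^ snd k0 = \<bar>c k0 * X n ^ fst k0 * Y n ^ snd k0\<bar>"
      using m0pos[of n] by simp
    also have "\<dots> = \<bar>c k0\<bar> * (\<bar>X n\<bar> ^ fst k0 * \<bar>Y n\<bar> ^ snd k0)" by (simp add: abs_mult power_abs)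
    also have "\<dots> = \<bar>c k0\<bar> * P0 n" using mono_exp[of X n Y, OF Xnz[of n] Ynz[of n]] by (simp add: P0_def)
    finally show ?thesis using P0pos[of n] by simp
  qed
  have Qeq: "peval c (X n) (Y n) / P0 n = \<bar>c k0\<bar>
      + (\<Sum>k\<in>supp2 c - {k0}. c k * X n ^ fst k * Y n ^ snd k / P0 n)" for n
  proof -
    have "peval c (X n) (Y n) = c k0 * X n ^ fst k0 * Y n ^ snd k0
        + (\<Sum>k\<in>supp2 c - {k0}. c k * X n ^ fst k * Y n ^ snd k)"
      unfolding peval_def by (rule sum.remove[OF finS k0S])
    thus ?thesis by (simp add: add_divide_distrib sum_divide_distrib t0)
  qed
  have tk: "(\<lambda>n. c k * X n ^ fst k * Y n ^ snd k / P0 n) \<longlonglongrightarrow> 0" if "k \<in> supp2 c - {k0}" for k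
  proof -
    have e: "\<bar>c k * X n ^ fst k * Y n ^ snd k / P0 n\<bar> = \<bar>c k\<bar> * exp (- (Lg X Y k n - Lg X Y k0 n))" for n
    proof -
      have "\<bar>c k * X n ^ fst k * Y n ^ snd k / P0 n\<bar> = \<bar>c k\<bar> * (\<bar>X n\<bar> ^ fst k * \<bar>Y n\<bar> ^ snd k) / P0 n"
        using P0pos[of n] by (simp add: abs_mult power_abs)
      also have "\<dots> = \<bar>c k\<bar> * exp (- Lg X Y k n) / exp (- Lg X Y k0 n)"
        using mono_exp[of X n Y, OF Xnz[of n] Ynz[of n]] by (simp add: P0_def)
      also have "\<dots> = \<bar>c k\<bar> * exp (- (Lg X Y k n - Lg X Y k0 n))"
      proof -
        have e1: "exp (- Lg X Y k n) / exp (- Lg X Y k0 n) = exp (- Lg X Y k n - - Lg X Y k0 n)"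
          by (rule exp_diff[symmetric])
        have e2: "- Lg X Y k n - - Lg X Y k0 n = - (Lg X Y k n - Lg X Y k0 n)" by simp
        show ?thesis by (simp only: times_divide_eq_right[symmetric] e1 e2)
      qed
      finally show ?thesis .
    qed
    have "(\<lambda>n. \<bar>c k\<bar> * exp (- (Lg X Y k n - Lg X Y k0 n))) \<longlonglongrightarrow> \<bar>c k\<bar> * 0"
      by (rule tendsto_mult[OF tendsto_const]) (use rat that in auto)
    hence "(\<lambda>n. \<bar>c k * X n ^ fst k * Y n ^ snd k / P0 n\<bar>) \<longlonglongrightarrow> 0" unfolding e by simp
    thus ?thesis by (rule tendsto_rabs_zero_cancel)
  qed
  have "(\<lambda>n. peval c (X n) (Y n) / P0 n) \<longlonglongrightarrow> \<bar>c k0\<bar> + (\<Sum>k\<in>supp2 c - {k0}. 0)"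
    unfolding Qeq by (rule tendsto_add[OF tendsto_const tendsto_sum]) (rule tk)
  hence "(\<lambda>n. peval c (X n) (Y n) / P0 n) \<longlonglongrightarrow> \<bar>c k0\<bar>" by simp
  moreover have "\<bar>c k0\<bar> > 0" using ck0 by simp
  ultimately have "eventually (\<lambda>n. peval c (X n) (Y n) / P0 n > 0) sequentially"
    using order_tendstoD(1) by blast
  then obtain n where "peval c (X n) (Y n) / P0 n > 0" using ev_ex by blast
  thus False using pneg[of n] P0pos[of n] by (simp add: divide_pos_pos zero_less_divide_iff)
qed

lemma core3:
  assumes hC2: "\<forall>A\<in>calA c. C2 c A" and gs: "goodseq c X Y" and k0S: "k0 \<in> supp2 c"
    and argmin: "\<forall>n. \<forall>k\<in>supp2 c. Lg X Y k0 n \<le> Lg X Y k n"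
    and sx: "\<forall>n. sgn (X n) = \<sigma>" and sy: "\<forall>n. sgn (Y n) = \<tau>"
    and conv: "\<forall>k\<in>supp2 c. convergent (\<lambda>n. exp (- (Lg X Y k n - Lg X Y k0 n)))"
  shows False
proof (cases "\<forall>k\<in>supp2 c. k \<noteq> k0 \<longrightarrow> lim (\<lambda>n. exp (- (Lg X Y k n - Lg X Y k0 n))) = 0")
  case True
  show False
  proof (rule vertexcase[OF gs k0S], intro ballI impI)
    fix k assume "k \<in> supp2 c" "k \<noteq> k0"
    thus "(\<lambda>n. exp (- (Lg X Y k n - Lg X Y k0 n))) \<longlonglongrightarrow> 0"
      using True conv by (metis convergent_LIMSEQ_iff)
  qed
next
  case False
  then obtain k1 where k1S: "k1 \<in> supp2 c" and k10: "k1 \<noteq> k0"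
    and rho: "lim (\<lambda>n. exp (- (Lg X Y k1 n - Lg X Y k0 n))) \<noteq> 0" by blast
  have Xnz: "X n \<noteq> 0" and Ynz: "Y n \<noteq> 0"
    and Xlt: "\<bar>X n\<bar> < 1" and Ylt: "\<bar>Y n\<bar> < 1" for n
    using gs by (auto simp: goodseq_def)
  have X0: "X \<longlonglongrightarrow> 0" and Y0: "Y \<longlonglongrightarrow> 0" using gs by (auto simp: goodseq_def)
  define \<rho> where "\<rho> = lim (\<lambda>n. exp (- (Lg X Y k1 n - Lg X Y k0 n)))"
  define ell where "ell n = Lg X Y k1 n - Lg X Y k0 n" for n
  have elim: "(\<lambda>n. exp (- ell n)) \<longlonglongrightarrow> \<rho>"
    using conv k1S by (simp add: \<rho>_def ell_def convergent_LIMSEQ_iff)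
  have "\<rho> \<ge> 0" by (rule tendsto_lowerbound[OF elim]) (auto intro!: always_eventually less_imp_le)
  hence rpos: "\<rho> > 0" using rho by (simp add: \<rho>_def)
  have "(\<lambda>n. ln (exp (- ell n))) \<longlonglongrightarrow> ln \<rho>" using tendsto_ln[OF elim] rpos by simp
  hence "(\<lambda>n. - ell n) \<longlonglongrightarrow> ln \<rho>" by simp
  hence ellim: "ell \<longlonglongrightarrow> - ln \<rho>" using tendsto_minus by fastforce
  have ell0: "ell n \<ge> 0" for n using argmin k1S by (simp add: ell_def)
  define s where "s n = - ln \<bar>X n\<bar>" for n
  define t where "t n = - ln \<bar>Y n\<bar>" for n
  have spos: "s n > 0" for n using Xnz[of n] Xlt[of n] by (simp add: s_def)
  have tpos: "t n > 0" for n using Ynz[of n] Ylt[of n] by (simp add: t_def)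
  define ai where "ai = int (fst k1) - int (fst k0)"
  define bi where "bi = int (snd k1) - int (snd k0)"
  have ell_eq: "ell n = real_of_int ai * s n + real_of_int bi * t n" for n
    by (simp add: ell_def Lg_def ai_def bi_def s_def t_def algebra_simps)
  have nz: "ai \<noteq> 0 \<or> bi \<noteq> 0" using k10 by (auto simp: ai_def bi_def prod_eq_iff)
  consider "ai \<ge> 0" "bi \<ge> 0" | "ai \<le> 0" "bi \<le> 0" | "ai > 0" "bi < 0" | "ai < 0" "bi > 0"
    by linarith
  then show False
  proof cases
    case 1
    show False
    proof (cases "ai \<ge> 1")
      case True
      have "s n \<le> ell n" for n
      proof -
        have "s n \<le> real_of_int ai * s n" using True spos[of n] by (simp add: mult_le_cancel_right1)
        moreover have "real_of_int bi * t n \<ge> 0" using 1 tpos[of n] by simp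
        ultimately show ?thesis using ell_eq[of n] by linarith
      qed
      thus False using bounded_log_contra[OF X0 _ ellim] Xnz by (simp add: s_def)
    next
      case False
      hence "bi \<ge> 1" using 1 nz by linarith
      have "t n \<le> ell n" for n
      proof -
        have "t n \<le> real_of_int bi * t n" using \<open>bi \<ge> 1\<close> tpos[of n] by (simp add: mult_le_cancel_right1)
        moreover have "real_of_int ai * s n \<ge> 0" using 1 spos[of n] by simp
        ultimately show ?thesis using ell_eq[of n] by linarith
      qed
      thus False using bounded_log_contra[OF Y0 _ ellim] Ynz by (simp add: t_def)
    qed
  next
    case 2
    have a: "real_of_int ai * s 0 \<le> 0" using 2 spos[of 0] by (simp add: mult_nonpos_nonneg)
    have b: "real_of_int bi * t 0 \<le> 0" using 2 tpos[of 0] by (simp add: mult_nonpos_nonneg)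
    have "real_of_int ai * s 0 < 0 \<or> real_of_int bi * t 0 < 0"
      using nz 2 spos[of 0] tpos[of 0] by (auto simp: mult_neg_pos)
    thus False using a b ell0[of 0] ell_eq[of 0] by linarith
  next
    case 3
    define P where "P = nat ai"
    define Q where "Q = nat (- bi)"
    have P0: "P > 0" and Q0: "Q > 0" using 3 by (auto simp: P_def Q_def)
    note cp = copr[OF P0 Q0]
    define g where "g = gcd P Q"
    define A1 where "A1 = Q div g"
    define A2 where "A2 = P div g"
    have AN: "(A1, A2) \<in> N0sq" and eP: "real P = real g * real A2" and eQ: "real Q = real g * real A1"
      and g0: "g > 0" using cp by (auto simp: A1_def A2_def g_def)
    have ra: "real_of_int ai = real P" using 3 by (simp add: P_def)
    have rb: "real_of_int bi = - real Q" using 3 by (simp add: Q_def)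
    have feq: "(\<lambda>n. real A2 * (- ln \<bar>X n\<bar>) - real A1 * (- ln \<bar>Y n\<bar>)) = (\<lambda>n. ell n / real g)"
    proof
      fix n
      show "real A2 * (- ln \<bar>X n\<bar>) - real A1 * (- ln \<bar>Y n\<bar>) = ell n / real g"
        using g0 unfolding ell_eq ra rb eP eQ s_def t_def by (simp add: field_simps)
    qed
    have "(\<lambda>n. real A2 * (- ln \<bar>X n\<bar>) - real A1 * (- ln \<bar>Y n\<bar>)) \<longlonglongrightarrow> - ln \<rho> / real g"
      unfolding feq by (intro tendsto_divide ellim tendsto_const) (use g0 in simp)
    thus False using edge[OF hC2 gs AN sx sy] by blast
  next
    case 4
    define P where "P = nat (- ai)"
    define Q where "Q = nat bi"
    have P0: "P > 0" and Q0: "Q > 0" using 4 by (auto simp: P_def Q_def)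
    note cp = copr[OF P0 Q0]
    define g where "g = gcd P Q"
    define A1 where "A1 = Q div g"
    define A2 where "A2 = P div g"
    have AN: "(A1, A2) \<in> N0sq" and eP: "real P = real g * real A2" and eQ: "real Q = real g * real A1"
      and g0: "g > 0" using cp by (auto simp: A1_def A2_def g_def)
    have ra: "real_of_int ai = - real P" using 4 by (simp add: P_def)
    have rb: "real_of_int bi = real Q" using 4 by (simp add: Q_def)
    have feq: "(\<lambda>n. real A2 * (- ln \<bar>X n\<bar>) - real A1 * (- ln \<bar>Y n\<bar>)) = (\<lambda>n. - ell n / real g)"
    proof
      fix n
      show "real A2 * (- ln \<bar>X n\<bar>) - real A1 * (- ln \<bar>Y n\<bar>) = - ell n / real g"
        using g0 unfolding ell_eq ra rb eP eQ s_def t_def by (simp add: field_simps)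
    qed
    have "(\<lambda>n. real A2 * (- ln \<bar>X n\<bar>) - real A1 * (- ln \<bar>Y n\<bar>)) \<longlonglongrightarrow> - (- ln \<rho>) / real g"
      unfolding feq by (intro tendsto_divide tendsto_minus ellim tendsto_const) (use g0 in simp)
    thus False using edge[OF hC2 gs AN sx sy] by blast
  qed
qed

lemma core2:
  assumes hC2: "\<forall>A\<in>calA c. C2 c A" and gs: "goodseq c X Y" and k0S: "k0 \<in> supp2 c"
    and argmin: "\<forall>n. \<forall>k\<in>supp2 c. Lg X Y k0 n \<le> Lg X Y k n"
    and sx: "\<forall>n. sgn (X n) = \<sigma>" and sy: "\<forall>n. sgn (Y n) = \<tau>"
  shows False
proof -
  define f where "f k n = exp (- (Lg X Y k n - Lg X Y k0 n))" for k n
  have "\<forall>k\<in>supp2 c. bounded (range (f k))"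
  proof
    fix k assume kS: "k \<in> supp2 c"
    have "norm (f k n) \<le> 1" for n
    proof -
      have "Lg X Y k0 n \<le> Lg X Y k n" using argmin kS by blast
      hence "exp (- (Lg X Y k n - Lg X Y k0 n)) \<le> 1" by simp
      thus ?thesis by (simp add: f_def)
    qed
    hence "\<forall>x\<in>range (f k). norm x \<le> 1" by blast
    thus "bounded (range (f k))" by (auto simp: bounded_iff)
  qed
  then obtain r where r: "strict_mono r" "\<forall>k\<in>supp2 c. convergent (\<lambda>n. f k (r n))"
    using multi_subseq[OF finS] by blast
  have LgS: "Lg (\<lambda>n. X (r n)) (\<lambda>n. Y (r n)) k n = Lg X Y k (r n)" for k n by (simp add: Lg_def)
  show False
  proof (rule core3[OF hC2 goodseq_sub[OF gs r(1)] k0S])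
    show "\<forall>n. \<forall>k\<in>supp2 c. Lg (\<lambda>n. X (r n)) (\<lambda>n. Y (r n)) k0 n \<le> Lg (\<lambda>n. X (r n)) (\<lambda>n. Y (r n)) k n"
      using argmin by (simp add: LgS)
    show "\<forall>n. sgn (X (r n)) = \<sigma>" using sx by simp
    show "\<forall>n. sgn (Y (r n)) = \<tau>" using sy by simp
    show "\<forall>k\<in>supp2 c. convergent (\<lambda>n. exp (- (Lg (\<lambda>n. X (r n)) (\<lambda>n. Y (r n)) k n - Lg (\<lambda>n. X (r n)) (\<lambda>n. Y (r n)) k0 n)))"
      using r(2) by (simp add: LgS f_def)
  qed
qed

lemma core1:
  assumes hC2: "\<forall>A\<in>calA c. C2 c A" and gs: "goodseq c X Y"
  shows False
proof -
  have pneg: "peval c (X 0) (Y 0) < 0" using gs by (simp add: goodseq_def)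
  have Sne: "supp2 c \<noteq> {}" using Sne_of_neg[OF pneg] .
  have ex: "\<exists>k. k \<in> supp2 c \<and> (\<forall>k'\<in>supp2 c. Lg X Y k n \<le> Lg X Y k' n)" for n
  proof -
    define V where "V = (\<lambda>k. Lg X Y k n) ` supp2 c"
    have fV: "finite V" using finS by (simp add: V_def)
    have Vne: "V \<noteq> {}" using Sne by (simp add: V_def)
    have "Min V \<in> V" using fV Vne by (rule Min_in)
    then obtain k where kS: "k \<in> supp2 c" and kv: "Lg X Y k n = Min V" by (auto simp: V_def)
    have "Lg X Y k n \<le> Lg X Y k' n" if "k' \<in> supp2 c" for k'
    proof -
      have "Lg X Y k' n \<in> V" using that by (simp add: V_def)
      from Min_le[OF fV this] show ?thesis using kv by simp
    qed
    thus ?thesis using kS by blast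
  qed
  have "\<forall>n. \<exists>k. k \<in> supp2 c \<and> (\<forall>k'\<in>supp2 c. Lg X Y k n \<le> Lg X Y k' n)" using ex by blast
  from choice[OF this] obtain km where km: "\<And>n. km n \<in> supp2 c" "\<And>n k'. k' \<in> supp2 c \<Longrightarrow> Lg X Y (km n) n \<le> Lg X Y k' n"
    by blast
  define h where "h n = (km n, sgn (X n), sgn (Y n))" for n
  have sg: "sgn (x::real) \<in> {-1, 0, 1}" for x by (simp add: sgn_real_def)
  have "h n \<in> supp2 c \<times> {-1, 0, 1} \<times> {-1, 0, 1}" for n
    unfolding h_def using km(1)[of n] sg[of "X n"] sg[of "Y n"] by blast
  hence sub: "range h \<subseteq> supp2 c \<times> {-1, 0, 1} \<times> {-1, 0, 1}" by blast
  have "finite (supp2 c \<times> {-1::real, 0, 1} \<times> {-1::real, 0, 1})" using finS by simp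
  hence fin: "finite (range h)" using sub by (rule finite_subset[rotated])
  obtain v where "v \<in> range h" and inf: "infinite (h -` {v})"
    using inf_img_fin_domE[OF fin infinite_UNIV_nat] by blast
  have "\<exists>r::nat\<Rightarrow>nat. strict_mono r \<and> (\<forall>n. h (r n) = v)" using infinite_enumerate[OF inf] by auto
  then obtain r :: "nat \<Rightarrow> nat" where r1: "strict_mono r" and r2: "\<forall>n. h (r n) = v" by (elim exE conjE)
  obtain k0 \<sigma> \<tau> where v: "v = (k0, \<sigma>, \<tau>)" by (cases v) auto
  have hrn: "h (r n) = v" for n using r2 by blast
  have hr: "km (r n) = k0" "sgn (X (r n)) = \<sigma>" "sgn (Y (r n)) = \<tau>" for n
    using hrn[of n] unfolding h_def v by simp_all
  have k0S: "k0 \<in> supp2 c" using km(1)[of "r 0"] hr(1)[of 0] by simp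
  have LgS: "Lg (\<lambda>n. X (r n)) (\<lambda>n. Y (r n)) k n = Lg X Y k (r n)" for k n by (simp add: Lg_def)
  show False
  proof (rule core2[OF hC2 goodseq_sub[OF gs r1] k0S])
    show "\<forall>n. \<forall>k\<in>supp2 c. Lg (\<lambda>n. X (r n)) (\<lambda>n. Y (r n)) k0 n \<le> Lg (\<lambda>n. X (r n)) (\<lambda>n. Y (r n)) k n"
    proof (intro allI ballI)
      fix n k assume kS: "k \<in> supp2 c"
      have "Lg X Y (km (r n)) (r n) \<le> Lg X Y k (r n)" using km(2)[OF kS] .
      thus "Lg (\<lambda>n. X (r n)) (\<lambda>n. Y (r n)) k0 n \<le> Lg (\<lambda>n. X (r n)) (\<lambda>n. Y (r n)) k n"
        unfolding LgS hr(1) .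
    qed
    show "\<forall>n. sgn (X (r n)) = \<sigma>" using hr(2) by blast
    show "\<forall>n. sgn (Y (r n)) = \<tau>" using hr(3) by blast
  qed
qed

end


lemma perturb:
  fixes f :: "real \<times> real \<Rightarrow> real"
  assumes cont: "continuous_on UNIV f" and z: "dist z a < d" and fz: "f z < 0"
  shows "\<exists>w. fst w \<noteq> 0 \<and> snd w \<noteq> 0 \<and> dist w a < d \<and> f w < 0"
proof -
  have "open (f -` {..<0})" using cont by (intro open_vimage) auto
  moreover have "z \<in> f -` {..<0}" using fz by simp
  ultimately obtain e where e: "e > 0" "\<forall>w. dist w z < e \<longrightarrow> w \<in> f -` {..<0}"
    unfolding open_dist by blast
  define e' where "e' = min e (d - dist z a)"
  have e'pos: "e' > 0" using e z by (simp add: e'_def)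
  define \<delta> where "\<delta> = e' / 4"
  define w where "w = (if fst z = 0 then \<delta> else fst z, if snd z = 0 then \<delta> else snd z)"
  have w1: "fst w \<noteq> 0" and w2: "snd w \<noteq> 0" using e'pos by (auto simp: w_def \<delta>_def)
  have d1: "\<bar>fst w - fst z\<bar> \<le> \<delta>" and d2: "\<bar>snd w - snd z\<bar> \<le> \<delta>"
    using e'pos by (auto simp: w_def \<delta>_def)
  have "dist w z = norm (fst w - fst z, snd w - snd z)"
    by (cases w, cases z) (simp add: dist_norm)
  also have "\<dots> \<le> norm (fst w - fst z) + norm (snd w - snd z)" by (rule norm_Pair_le)
  also have "\<dots> \<le> 2 * \<delta>" using d1 d2 by simp
  finally have dwz: "dist w z < e'" using e'pos by (simp add: \<delta>_def)
  hence "dist w z < e" by (simp add: e'_def)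
  hence "f w < 0" using e(2) by blast
  moreover have "dist w a < d"
    using dist_triangle[of w a z] dwz by (simp add: e'_def)
  ultimately show ?thesis using w1 w2 by blast
qed

lemma peval_cont: "continuous_on UNIV (\<lambda>z::real \<times> real. peval c (fst z) (snd z))"
  unfolding peval_def by (intro continuous_intros)

theorem theorem3:
  fixes c :: "nat \<times> nat \<Rightarrow> real"
  assumes poly: "is_poly2 c"
    and zero: "peval c 0 0 = 0"
    and grad_x: "((\<lambda>x. peval c x 0) has_real_derivative 0) (at 0)"
    and grad_y: "((\<lambda>y. peval c 0 y) has_real_derivative 0) (at 0)"
    and dim2: "aff_dim (newton_polygon c) = 2"
    and main_nonneg: "\<forall>A1 A2 x y. A1 \<ge> 1 \<and> A2 \<ge> 1 \<longrightarrow> peval (main_form c (A1, A2)) x y \<ge> 0"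
  shows "(calA c = {} \<longrightarrow> local_min_origin c)
       \<and> ((\<exists>A\<in>calA c. C1 c A) \<longrightarrow> \<not> local_min_origin c)
       \<and> (calA c \<noteq> {} \<and> (\<forall>A\<in>calA c. \<not> C1 c A \<and> C2 c A) \<longrightarrow> local_min_origin c)"
proof -
  interpret PMloc c by (rule PMloc.intro) (fact poly, fact main_nonneg)
  have lm: "local_min_origin c" if hC2: "\<forall>A\<in>calA c. C2 c A"
  proof (rule ccontr)
    assume nl: "\<not> local_min_origin c"
    have nev: "\<not> (\<exists>d>0. \<forall>z. dist z (0::real, 0::real) < d \<longrightarrow> peval c (fst z) (snd z) \<ge> 0)"
      using nl unfolding local_min_origin_def zero eventually_nhds_metric by simp
    have "\<exists>w. fst w \<noteq> 0 \<and> snd w \<noteq> 0 \<and> dist w (0::real, 0::real) < inverse (real (Suc n))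
             \<and> peval c (fst w) (snd w) < 0" for n
    proof -
      have "inverse (real (Suc n)) > 0" by simp
      then obtain z where z: "dist z (0::real, 0::real) < inverse (real (Suc n))" "\<not> peval c (fst z) (snd z) \<ge> 0"
        using nev by blast
      show ?thesis by (rule perturb[OF peval_cont z(1)]) (use z(2) in simp)
    qed
    hence "\<forall>n. \<exists>w. fst w \<noteq> 0 \<and> snd w \<noteq> 0 \<and> dist w (0::real, 0::real) < inverse (real (Suc n))
             \<and> peval c (fst w) (snd w) < 0" by blast
    from choice[OF this] obtain zs where zs: "\<And>n. fst (zs n) \<noteq> 0 \<and> snd (zs n) \<noteq> 0
       \<and> dist (zs n) (0::real, 0::real) < inverse (real (Suc n)) \<and> peval c (fst (zs n)) (snd (zs n)) < 0"
      by blast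
    define X where "X n = fst (zs n)" for n
    define Y where "Y n = snd (zs n)" for n
    have bX: "\<bar>X n\<bar> < inverse (real (Suc n))" for n
      using dist_fst_le[of "zs n" "(0, 0)"] zs[of n] by (simp add: X_def)
    have bY: "\<bar>Y n\<bar> < inverse (real (Suc n))" for n
      using dist_snd_le[of "zs n" "(0, 0)"] zs[of n] by (simp add: Y_def)
    have inv1: "inverse (real (Suc n)) \<le> 1" for n using le_imp_inverse_le[of 1 "real (Suc n)"] by simp
    have gs: "goodseq c X Y"
      unfolding goodseq_def
    proof (intro conjI allI)
      fix n
      show "X n \<noteq> 0" "Y n \<noteq> 0" "peval c (X n) (Y n) < 0" using zs[of n] by (auto simp: X_def Y_def)
      show "\<bar>X n\<bar> < 1" using bX[of n] inv1[of n] by linarith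
      show "\<bar>Y n\<bar> < 1" using bY[of n] inv1[of n] by linarith
    next
      show "X \<longlonglongrightarrow> 0"
        by (rule Lim_null_comparison[OF _ LIMSEQ_inverse_real_of_nat]) (use bX in \<open>auto intro!: always_eventually less_imp_le\<close>)
      show "Y \<longlonglongrightarrow> 0"
        by (rule Lim_null_comparison[OF _ LIMSEQ_inverse_real_of_nat]) (use bY in \<open>auto intro!: always_eventually less_imp_le\<close>)
    qed
    show False by (rule core1[OF hC2 gs])
  qed
  have part2: "\<not> local_min_origin c" if A: "A \<in> calA c" and C: "C1 c A" for A
  proof
    assume lmo: "local_min_origin c"
    obtain A1 A2 where AA: "A = (A1, A2)" by (cases A)
    have AN: "(A1, A2) \<in> N0sq" using A AA by (simp add: calA_def)
    have A1: "A1 \<ge> 1" and A2: "A2 \<ge> 1" using AN by (auto simp: N0sq_def)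
    obtain x0 y0 where z0: "peval (phi_form c A 0) x0 y0 = 0" and n1: "peval (phi_form c A 1) x0 y0 < 0"
      using C by (auto simp: C1_def)
    define Bx where "Bx = levels c A ! 1"
    have ph1: "phi_form c A 1 = qh_part c A Bx" by (simp add: phi_form_def Bx_def)
    have ne: "{k \<in> supp2 c. wdeg A k = Bx} \<noteq> {}"
    proof
      assume "{k \<in> supp2 c. wdeg A k = Bx} = {}"
      hence "peval (phi_form c A 1) x0 y0 = 0" unfolding ph1 peval_qh by (simp only: sum.empty)
      thus False using n1 by simp
    qed
    hence Sne: "supp2 c \<noteq> {}" by auto
    define W where "W = wdeg A ` supp2 c"
    define B1 where "B1 = Min W"
    have finW: "finite W" using finS by (simp add: W_def)
    have ph0: "phi_form c A 0 = qh_part c A B1"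
      using phi0[OF finS Sne] by (simp add: main_form_def B1_def W_def)
    have BxW: "Bx \<in> W" using ne by (auto simp: W_def)
    have BxB1: "Bx \<noteq> B1"
    proof
      assume "Bx = B1"
      hence "phi_form c A 1 = phi_form c A 0" using ph0 ph1 by simp
      thus False using z0 n1 by simp
    qed
    have W1: "W - {B1} \<noteq> {}" using BxW BxB1 by auto
    define B2 where "B2 = Min (W - {B1})"
    have BxB2: "Bx = B2"
      using levels1[OF finS] W1 by (simp add: Bx_def B2_def B1_def W_def)
    have B2in: "B2 \<in> W - {B1}" unfolding B2_def using W1 finW by (intro Min_in) auto
    have B2le: "\<forall>k\<in>supp2 c. wdeg (A1,A2) k \<noteq> B1 \<longrightarrow> B2 \<le> wdeg (A1,A2) k"
      using finW by (auto simp: B2_def W_def AA)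
    define l where "l n = inverse (real (Suc n))" for n
    have lpos: "l n > 0" for n by (simp add: l_def)
    have l0: "l \<longlonglongrightarrow> 0" unfolding l_def by (rule LIMSEQ_inverse_real_of_nat)
    define F2 where "F2 n = (\<Sum>k\<in>{k\<in>supp2 c. wdeg (A1,A2) k \<noteq> B1}. c k * l n ^ (wdeg (A1,A2) k - B2) * x0 ^ fst k * y0 ^ snd k)" for n
    have pF: "peval c (l n ^ A1 * x0) (l n ^ A2 * y0) = l n ^ B2 * F2 n" for n
    proof -
      have "peval c (l n ^ A1 * x0) (l n ^ A2 * y0) = l n ^ B1 * peval (qh_part c (A1,A2) B1) x0 y0 + l n ^ B2 * F2 n"
        unfolding peval_scale F2_def by (rule split_sum[OF finS B2le])
      moreover have "peval (qh_part c (A1,A2) B1) x0 y0 = 0" using z0 ph0 AA by simp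
      ultimately show ?thesis by simp
    qed
    have sets: "{k \<in> {k\<in>supp2 c. wdeg (A1,A2) k \<noteq> B1}. wdeg (A1,A2) k = B2} = {k\<in>supp2 c. wdeg (A1,A2) k = B2}"
      using B2in by auto
    have pq: "peval (phi_form c A 1) x0 y0 = peval (qh_part c (A1,A2) B2) x0 y0" using ph1 BxB2 AA by simp
    have F2lim: "F2 \<longlonglongrightarrow> peval (phi_form c A 1) x0 y0"
      unfolding pq F2_def[abs_def] peval_qh sets[symmetric]
      by (rule lim_scaled) (use finS B2le l0 in auto)
    have ev1: "eventually (\<lambda>n. F2 n < 0) sequentially"
      using order_tendstoD(2)[OF F2lim n1] .
    have zlim: "(\<lambda>n. (l n ^ A1 * x0, l n ^ A2 * y0)) \<longlonglongrightarrow> (0, 0)"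
    proof -
      have "(\<lambda>n. (l n ^ A1 * x0, l n ^ A2 * y0)) \<longlonglongrightarrow> (0 ^ A1 * x0, 0 ^ A2 * y0)"
        by (intro tendsto_Pair tendsto_mult tendsto_power l0 tendsto_const)
      moreover have "(0::real) ^ A1 = 0" "(0::real) ^ A2 = 0" using A1 A2 by auto
      ultimately show ?thesis by simp
    qed
    have "eventually (\<lambda>z. peval c (fst z) (snd z) \<ge> 0) (nhds (0::real, 0::real))"
      using lmo zero by (simp add: local_min_origin_def)
    hence ev2: "eventually (\<lambda>n. peval c (l n ^ A1 * x0) (l n ^ A2 * y0) \<ge> 0) sequentially"
      using zlim unfolding filterlim_iff by fastforce
    obtain n where "F2 n < 0" "peval c (l n ^ A1 * x0) (l n ^ A2 * y0) \<ge> 0"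
      using ev_ex[OF eventually_conj[OF ev1 ev2]] by blast
    moreover have "l n ^ B2 * F2 n < 0" using lpos[of n] \<open>F2 n < 0\<close> by (simp add: mult_pos_neg)
    ultimately show False using pF[of n] by simp
  qed
  show ?thesis using lm part2 by blast
qed

end
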